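(* Let $X\subset Y$ be spaces, $\alpha<\omega_1$, and let $\mathcal C$ be a Suslin scheme on $X$ satisfying $\mathcal A(\overline{\mathcal C}^Y)=X$. Then: (i) if $\alpha$ is even, $\mathbf R_\alpha(\mathcal C,Y)\setminus X=\{y\in Y\setminus X: D_{\mathrm{iie}}^{\alpha'}(S_{\mathcal C}(y))\ne\emptyset\}$; (ii) if $\alpha$ is odd, $\mathbf R_\alpha(\mathcal C,Y)\setminus X=\{y\in Y\setminus X: D_{\mathrm{iie}}^{\alpha'}(S_{\mathcal C}(y))\supsetneq\{\emptyset\}\}$; (iii) if $\alpha$ is odd, then for every $i\in\omega$, $\mathbf R_{T^c_{\alpha,i}}(\mathcal C,Y)\setminus X=\{y\in Y\setminus X: D_{\mathrm{iie}}^{\alpha'}(S_{\mathcal C}(y))\cap\omega^i\ne\emptyset\}$.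
   Context: Sequences/trees: $\omega^{<\omega}$ finite sequences, $\omega^i$ those of length $i$, $\sqsubseteq$ extension, a tree is a subset of $\omega^{<\omega}$ closed under initial segments; for $S\subset\omega^{<\omega}$, $\mathrm{cl}_{\mathrm{Tr}}(S)$ is the set of initial segments of elements of $S$; $i^\frown S=\{(i)^\frown s:s\in S\}$. Suslin scheme in $Y$: family $\mathcal C=(C(s))_{s\in\omega^{<\omega}}$ of subsets of $Y$ with $C(t)\subset C(s)$ for $t\sqsupseteq s$; $\mathcal A(\mathcal C)=\bigcup_{\sigma\in\omega^\omega}\bigcap_n C(\sigma|n)$; a Suslin scheme on $X$ is a Suslin scheme in $X$ with $\mathcal A(\mathcal C)\supset X$ (hence $=X$). $\overline{\mathcal C}^Y=(\overline{C(s)\cap Y}^Y)_s$. Admissible maps $\varphi:T\to\omega^{<\omega}$: monotone w.r.t. $\sqsubseteq$ and $|\varphi(t)|=t(0)+\dots+t(k)$. $\mathbf R_T(\mathcal D)=\{x\in D(\emptyset):\exists$ admissible $\varphi:T\to\omega^{<\omega}$, $x\in D(\varphi(t))\ \forall t\in T\}$; $\mathbf R_T(\mathcal C,Y)=\mathbf R_T(\overline{\mathcal C}^Y)$. Trees $T_\beta$: fix bijections $\pi_\beta:\omega\to\beta$ for countable limit $\beta$; $T_0=\{\emptyset\}$, $T_\beta=\{\emptyset\}\cup\bigcup_n n^\frown T_{\beta-1}$ (successor), $T_\beta=\{\emptyset\}\cup\bigcup_n n^\frown T_{\pi_\beta(n)}$ (limit), $T_{\omega_1}=\omega^{<\omega}$.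 Writing $\alpha=\lambda+2n+i$ ($\lambda$ limit or $0$, $n\in\omega$, $i\in\{0,1\}$), $\alpha'=\lambda+n$. Canonical trees: $T^c_\alpha=T_{\alpha'}$ for even $\alpha$; for odd $\alpha$ and $i\in\omega$, $T^c_{\alpha,i}=\{\emptyset\}\cup i^\frown T_{\alpha'}$ and $T^c_\alpha=T^c_{\alpha,1}$. $\mathbf R_\alpha(\mathcal C,Y)=\mathbf R_{T^c_\alpha}(\mathcal C,Y)$. Derivative: for a tree $T$, $D_{\mathrm{iie}}(T)=\{t\in T: T$ contains infinitely many pairwise incomparable extensions of $t$ of pairwise different lengths$\}$; for $S\subset\omega^{<\omega}$, $D^0_{\mathrm{iie}}(S)=\mathrm{cl}_{\mathrm{Tr}}(S)$, $D^{\beta+1}_{\mathrm{iie}}(S)=D_{\mathrm{iie}}(D^\beta_{\mathrm{iie}}(S))$, $D^\lambda_{\mathrm{iie}}(S)=\bigcap_{\beta<\lambda}D^\beta_{\mathrm{iie}}(S)$ for limit $\lambda$. For $y\in Y$, $S_{\mathcal C}(y)=\{s\in\omega^{<\omega}: y\in\overline{C(s)}^Y\}$. *)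

theory Defs
  imports "HOL-Analysis.Analysis" "HOL-Library.Sublist"
begin

(* Finite sequences omega^{<omega} are nat lists; s \<sqsubseteq> t is prefix s t. *)

definition suslin_scheme :: "(nat list \<Rightarrow> 'a set) \<Rightarrow> bool" where
  "suslin_scheme C \<longleftrightarrow> (\<forall>s t. prefix s t \<longrightarrow> C t \<subseteq> C s)"

definition suslin_op :: "(nat list \<Rightarrow> 'a set) \<Rightarrow> 'a set" where
  "suslin_op C = (\<Union>\<sigma>::nat \<Rightarrow> nat. \<Inter>n. C (map \<sigma> [0..<n]))"

text \<open>Closure of the scheme in the ambient space Y (= UNIV of the type).\<close>
definition closure_scheme :: "(nat list \<Rightarrow> 'a::topological_space set) \<Rightarrow> nat list \<Rightarrow> 'a set" where
  "closure_scheme C s = closure (C s)"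

definition admissible :: "nat list set \<Rightarrow> (nat list \<Rightarrow> nat list) \<Rightarrow> bool" where
  "admissible T \<phi> \<longleftrightarrow>
     (\<forall>s\<in>T. \<forall>t\<in>T. prefix s t \<longrightarrow> prefix (\<phi> s) (\<phi> t)) \<and>
     (\<forall>t\<in>T. length (\<phi> t) = sum_list t)"

definition R_tree :: "nat list set \<Rightarrow> (nat list \<Rightarrow> 'a set) \<Rightarrow> 'a set" where
  "R_tree T D = {x \<in> D []. \<exists>\<phi>. admissible T \<phi> \<and> (\<forall>t\<in>T. x \<in> D (\<phi> t))}"

definition R_tree_sp :: "nat list set \<Rightarrow> (nat list \<Rightarrow> 'a::topological_space set) \<Rightarrow> 'a set" where
  "R_tree_sp T C = R_tree T (closure_scheme C)"

definition S_C :: "(nat list \<Rightarrow> 'a::topological_space set) \<Rightarrow> 'a \<Rightarrow> nat list set" where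
  "S_C C y = {s. y \<in> closure (C s)}"

(* Ordinals: elements of an arbitrary well-ordered type *)

definition ord_zero :: "'o::wellorder \<Rightarrow> bool" where
  "ord_zero \<beta> \<longleftrightarrow> (\<forall>\<gamma>. \<not> \<gamma> < \<beta>)"

definition ord_succ :: "'o::wellorder \<Rightarrow> bool" where
  "ord_succ \<beta> \<longleftrightarrow> (\<exists>\<gamma><\<beta>. \<forall>\<delta><\<beta>. \<delta> \<le> \<gamma>)"

definition ord_limit :: "'o::wellorder \<Rightarrow> bool" where
  "ord_limit \<beta> \<longleftrightarrow> \<not> ord_zero \<beta> \<and> \<not> ord_succ \<beta>"

definition ord_pred :: "'o::wellorder \<Rightarrow> 'o" where
  "ord_pred \<beta> = (GREATEST \<gamma>. \<gamma> < \<beta>)"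

definition ord_next :: "'o::wellorder \<Rightarrow> 'o" where
  "ord_next \<gamma> = (LEAST \<delta>. \<gamma> < \<delta>)"

text \<open>alpha = lambda + k with lambda limit or zero, k finite.\<close>
definition ord_lam :: "'o::wellorder \<Rightarrow> 'o" where
  "ord_lam \<alpha> = (GREATEST \<gamma>. \<gamma> \<le> \<alpha> \<and> \<not> ord_succ \<gamma>)"

definition ord_fin :: "'o::wellorder \<Rightarrow> nat" where
  "ord_fin \<alpha> = (LEAST k. (ord_next ^^ k) (ord_lam \<alpha>) = \<alpha>)"

definition ord_even :: "'o::wellorder \<Rightarrow> bool" where
  "ord_even \<alpha> \<longleftrightarrow> even (ord_fin \<alpha>)"

text \<open>alpha' = lambda + n where alpha = lambda + 2n + i.\<close>
definition ord_prime :: "'o::wellorder \<Rightarrow> 'o" where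
  "ord_prime \<alpha> = (ord_next ^^ (ord_fin \<alpha> div 2)) (ord_lam \<alpha>)"

(* Trees T_beta, with pi beta : nat -> beta the fixed bijections for limit beta *)
definition T_tree :: "('o::wellorder \<Rightarrow> nat \<Rightarrow> 'o) \<Rightarrow> 'o \<Rightarrow> nat list set" where
  "T_tree \<pi> = wfrec {(x, y). x < y} (\<lambda>f \<beta>.
     if ord_zero \<beta> then {[]}
     else if ord_succ \<beta> then insert [] (\<Union>n. (\<lambda>t. n # t) ` f (ord_pred \<beta>))
     else insert [] (\<Union>n. (\<lambda>t. n # t) ` f (\<pi> \<beta> n)))"

definition Tc_odd :: "('o::wellorder \<Rightarrow> nat \<Rightarrow> 'o) \<Rightarrow> 'o \<Rightarrow> nat \<Rightarrow> nat list set" where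
  "Tc_odd \<pi> \<alpha> i = insert [] ((\<lambda>t. i # t) ` T_tree \<pi> (ord_prime \<alpha>))"

definition Tc :: "('o::wellorder \<Rightarrow> nat \<Rightarrow> 'o) \<Rightarrow> 'o \<Rightarrow> nat list set" where
  "Tc \<pi> \<alpha> = (if ord_even \<alpha> then T_tree \<pi> (ord_prime \<alpha>) else Tc_odd \<pi> \<alpha> 1)"

definition R_alpha :: "('o::wellorder \<Rightarrow> nat \<Rightarrow> 'o) \<Rightarrow> 'o \<Rightarrow> (nat list \<Rightarrow> 'a::topological_space set) \<Rightarrow> 'a set" where
  "R_alpha \<pi> \<alpha> C = R_tree_sp (Tc \<pi> \<alpha>) C"

definition cl_tr :: "nat list set \<Rightarrow> nat list set" where
  "cl_tr S = {s. \<exists>t\<in>S. prefix s t}"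

definition D_iie :: "nat list set \<Rightarrow> nat list set" where
  "D_iie T = {t \<in> T. \<exists>E \<subseteq> T. infinite E \<and> (\<forall>u\<in>E. prefix t u) \<and>
      (\<forall>u\<in>E. \<forall>v\<in>E. u \<noteq> v \<longrightarrow> \<not> prefix u v \<and> \<not> prefix v u \<and> length u \<noteq> length v)}"

definition D_iter :: "nat list set \<Rightarrow> 'o::wellorder \<Rightarrow> nat list set" where
  "D_iter S = wfrec {(x, y). x < y} (\<lambda>f \<beta>.
     if ord_zero \<beta> then cl_tr S
     else if ord_succ \<beta> then D_iie (f (ord_pred \<beta>))
     else (\<Inter>\<gamma>\<in>{\<gamma>. \<gamma> < \<beta>}. f \<gamma>))"

end

theory Submission
  imports Defs
begin


lemma ord_pred_props:
  fixes \<beta> :: "'o::wellorder"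
  assumes "ord_succ \<beta>"
  shows "ord_pred \<beta> < \<beta>" "\<And>\<delta>. \<delta> < \<beta> \<Longrightarrow> \<delta> \<le> ord_pred \<beta>"
proof -
  obtain \<gamma> where g: "\<gamma> < \<beta>" "\<forall>\<delta><\<beta>. \<delta> \<le> \<gamma>" using assms unfolding ord_succ_def by blast
  have e: "ord_pred \<beta> = \<gamma>" unfolding ord_pred_def
    by (rule Greatest_equality) (use g in auto)
  show "ord_pred \<beta> < \<beta>" using e g by simp
  show "\<And>\<delta>. \<delta> < \<beta> \<Longrightarrow> \<delta> \<le> ord_pred \<beta>" using e g by simp
qed

lemma ord_next_props:
  fixes \<gamma> \<delta> :: "'o::wellorder"
  assumes "\<gamma> < \<delta>"
  shows "\<gamma> < ord_next \<gamma>" "ord_next \<gamma> \<le> \<delta>" "ord_succ (ord_next \<gamma>)" "ord_pred (ord_next \<gamma>) = \<gamma>"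
    "\<And>\<epsilon>. \<epsilon> < ord_next \<gamma> \<Longrightarrow> \<epsilon> \<le> \<gamma>"
proof -
  show 1: "\<gamma> < ord_next \<gamma>" unfolding ord_next_def by (rule LeastI[of _ \<delta>]) (rule assms)
  show "ord_next \<gamma> \<le> \<delta>" unfolding ord_next_def by (rule Least_le) (rule assms)
  have 2: "\<And>\<epsilon>. \<epsilon> < ord_next \<gamma> \<Longrightarrow> \<epsilon> \<le> \<gamma>"
  proof -
    fix \<epsilon> assume "\<epsilon> < ord_next \<gamma>"
    show "\<epsilon> \<le> \<gamma>"
    proof (rule ccontr)
      assume "\<not> \<epsilon> \<le> \<gamma>" then have "\<gamma> < \<epsilon>" by simp
      then have "ord_next \<gamma> \<le> \<epsilon>" unfolding ord_next_def by (rule Least_le)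
      with \<open>\<epsilon> < ord_next \<gamma>\<close> show False by simp
    qed
  qed
  then show "\<And>\<epsilon>. \<epsilon> < ord_next \<gamma> \<Longrightarrow> \<epsilon> \<le> \<gamma>" .
  show "ord_succ (ord_next \<gamma>)" unfolding ord_succ_def using 1 2 by blast
  show "ord_pred (ord_next \<gamma>) = \<gamma>" unfolding ord_pred_def
    by (rule Greatest_equality) (use 1 2 in auto)
qed

lemma ord_succ_next:
  fixes \<beta> :: "'o::wellorder"
  assumes "ord_succ \<beta>" shows "ord_next (ord_pred \<beta>) = \<beta>"
proof -
  note p = ord_pred_props[OF assms]
  show ?thesis unfolding ord_next_def
  proof (rule Least_equality)
    show "ord_pred \<beta> < \<beta>" by (rule p(1))
    fix y assume "ord_pred \<beta> < y"
    then show "\<beta> \<le> y" using p(2) by (meson leD le_less_linear)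
  qed
qed

lemma limit_next_below:
  fixes \<beta> \<gamma> :: "'o::wellorder"
  assumes "ord_limit \<beta>" "\<gamma> < \<beta>" shows "ord_next \<gamma> < \<beta>" "\<gamma> < ord_next \<gamma>"
    "ord_succ (ord_next \<gamma>)" "ord_pred (ord_next \<gamma>) = \<gamma>"
proof -
  have "\<not> ord_succ \<beta>" using assms unfolding ord_limit_def by simp
  then obtain \<delta> where d: "\<delta> < \<beta>" "\<gamma> < \<delta>" using assms(2) unfolding ord_succ_def
    by (meson not_le)
  note n = ord_next_props[OF d(2)]
  show "ord_next \<gamma> < \<beta>" using n(2) d(1) by simp
  show "\<gamma> < ord_next \<gamma>" "ord_succ (ord_next \<gamma>)" "ord_pred (ord_next \<gamma>) = \<gamma>" using n by auto
qed

lemma wf_lt: "wf {(x::'o::wellorder, y). x < y}" by (rule wf)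

lemma T_tree_unfold:
  fixes \<beta> :: "'o::wellorder"
  assumes "ord_limit \<beta> \<longrightarrow> (\<forall>n. \<pi> \<beta> n < \<beta>)"
  shows "T_tree \<pi> \<beta> = (if ord_zero \<beta> then {[]}
     else if ord_succ \<beta> then insert [] (\<Union>n. (\<lambda>t. n # t) ` T_tree \<pi> (ord_pred \<beta>))
     else insert [] (\<Union>n. (\<lambda>t. n # t) ` T_tree \<pi> (\<pi> \<beta> n)))"
proof -
  have "T_tree \<pi> \<beta> = (\<lambda>f \<beta>.
     if ord_zero \<beta> then {[]}
     else if ord_succ \<beta> then insert [] (\<Union>n. (\<lambda>t. n # t) ` f (ord_pred \<beta>))
     else insert [] (\<Union>n. (\<lambda>t. n # t) ` f (\<pi> \<beta> n))) (cut (T_tree \<pi>) {(x, y). x < y} \<beta>) \<beta>"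
    unfolding T_tree_def by (rule wfrec[OF wf_lt])
  then show ?thesis using assms ord_pred_props(1)[of \<beta>]
    by (auto simp: cut_apply ord_limit_def)
qed

lemma D_iter_unfold:
  fixes \<beta> :: "'o::wellorder"
  shows "D_iter S \<beta> = (if ord_zero \<beta> then cl_tr S
     else if ord_succ \<beta> then D_iie (D_iter S (ord_pred \<beta>))
     else (\<Inter>\<gamma>\<in>{\<gamma>. \<gamma> < \<beta>}. D_iter S \<gamma>))"
proof -
  have "D_iter S \<beta> = (\<lambda>f \<beta>.
     if ord_zero \<beta> then cl_tr S
     else if ord_succ \<beta> then D_iie (f (ord_pred \<beta>))
     else (\<Inter>\<gamma>\<in>{\<gamma>. \<gamma> < \<beta>}. f \<gamma>)) (cut (D_iter S) {(x, y). x < y} \<beta>) \<beta>"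
    unfolding D_iter_def by (rule wfrec[OF wf_lt])
  then show ?thesis using ord_pred_props(1)[of \<beta>]
    by (auto simp: cut_apply)
qed




lemma ord_lam_props:
  fixes \<alpha> :: "'o::wellorder"
  shows "ord_lam \<alpha> \<le> \<alpha>" "\<And>\<gamma>. ord_lam \<alpha> < \<gamma> \<Longrightarrow> \<gamma> \<le> \<alpha> \<Longrightarrow> ord_succ \<gamma>"
proof -
  define P where "P = (\<lambda>\<gamma>::'o. \<gamma> \<le> \<alpha> \<and> \<not> ord_succ \<gamma>)"
  define g where "g = (LEAST u. \<forall>p. P p \<longrightarrow> p \<le> u)"
  have ub: "\<forall>p. P p \<longrightarrow> p \<le> g" unfolding g_def by (rule LeastI[of _ \<alpha>]) (auto simp: P_def)
  have ga: "g \<le> \<alpha>" unfolding g_def by (rule Least_le) (auto simp: P_def)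
  have gs: "\<not> ord_succ g"
  proof
    assume "ord_succ g"
    note pp = ord_pred_props[OF this]
    have "\<not> (\<forall>p. P p \<longrightarrow> p \<le> ord_pred g)"
    proof
      assume "\<forall>p. P p \<longrightarrow> p \<le> ord_pred g"
      then have "g \<le> ord_pred g" unfolding g_def by (rule Least_le)
      with pp(1) show False by simp
    qed
    then obtain p where p: "P p" "\<not> p \<le> ord_pred g" by blast
    have "p \<le> g" using ub p by blast
    moreover have "p \<noteq> g" using p(1) \<open>ord_succ g\<close> unfolding P_def by blast
    ultimately have "p < g" by simp
    with pp(2) p(2) show False by blast
  qed
  have e: "ord_lam \<alpha> = g" unfolding ord_lam_def
    by (rule Greatest_equality) (use ga gs ub in \<open>auto simp: P_def\<close>)
  show "ord_lam \<alpha> \<le> \<alpha>" using e ga by simp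
  show "\<And>\<gamma>. ord_lam \<alpha> < \<gamma> \<Longrightarrow> \<gamma> \<le> \<alpha> \<Longrightarrow> ord_succ \<gamma>"
    using e ub unfolding P_def by (meson leD)
qed

lemma ord_fin_exists:
  fixes \<alpha> :: "'o::wellorder"
  shows "\<exists>k. (ord_next ^^ k) (ord_lam \<alpha>) = \<alpha>"
proof (rule ccontr)
  assume H: "\<not> ?thesis"
  let ?x = "\<lambda>k. (ord_next ^^ k) (ord_lam \<alpha>)"
  have lt: "?x k < \<alpha>" for k
  proof (induction k)
    case 0 then show ?case using H ord_lam_props(1)[of \<alpha>] by (metis funpow_0 order_le_less)
  next
    case (Suc k)
    have "?x (Suc k) \<le> \<alpha>" using ord_next_props(2)[OF Suc] by simp
    moreover have "?x (Suc k) \<noteq> \<alpha>" using H by blast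
    ultimately show ?case by simp
  qed
  define m where "m = (LEAST \<delta>. \<delta> \<le> \<alpha> \<and> (\<forall>k. ?x k < \<delta>))"
  have m: "m \<le> \<alpha> \<and> (\<forall>k. ?x k < m)" unfolding m_def by (rule LeastI[of _ \<alpha>]) (use lt in auto)
  have "ord_lam \<alpha> < m" using m by (metis funpow_0)
  then have "ord_succ m" using m ord_lam_props(2) by blast
  note pp = ord_pred_props[OF this]
  have "\<not> (ord_pred m \<le> \<alpha> \<and> (\<forall>k. ?x k < ord_pred m))"
  proof
    assume "ord_pred m \<le> \<alpha> \<and> (\<forall>k. ?x k < ord_pred m)"
    then have "m \<le> ord_pred m" unfolding m_def by (rule Least_le)
    with pp(1) show False by simp
  qed
  then obtain k where k: "\<not> ?x k < ord_pred m" using pp(1) m by force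
  have "?x k \<le> ord_pred m" using pp(2) m by blast
  with k have ek: "?x k = ord_pred m" by simp
  have "?x (Suc k) = ord_next (ord_pred m)" using ek by simp
  also have "\<dots> = m" by (rule ord_succ_next) fact
  finally show False using m by (metis less_irrefl)
qed

lemma ord_prime_le:
  fixes \<alpha> :: "'o::wellorder"
  shows "ord_prime \<alpha> \<le> \<alpha>"
proof -
  let ?x = "\<lambda>k. (ord_next ^^ k) (ord_lam \<alpha>)"
  have f: "?x (ord_fin \<alpha>) = \<alpha>" unfolding ord_fin_def using ord_fin_exists[of \<alpha>] by (rule LeastI_ex)
  have nf: "?x j \<noteq> \<alpha>" if "j < ord_fin \<alpha>" for j
    using that not_less_Least unfolding ord_fin_def by blast
  have "j \<le> ord_fin \<alpha> \<Longrightarrow> ?x j \<le> \<alpha>" for j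
  proof (induction j)
    case 0 then show ?case using ord_lam_props(1) by simp
  next
    case (Suc j)
    then have "?x j < \<alpha>" using nf[of j] by (simp add: order_le_less)
    then show ?case using ord_next_props(2) by simp
  qed
  then show ?thesis unfolding ord_prime_def by simp
qed




definition ptree :: "nat list set \<Rightarrow> bool" where
  "ptree S \<longleftrightarrow> (\<forall>t\<in>S. \<forall>s. prefix s t \<longrightarrow> s \<in> S)"

definition nochain :: "nat list set \<Rightarrow> bool" where
  "nochain S \<longleftrightarrow> \<not> (\<exists>f. \<forall>n. f n \<in> S \<and> strict_prefix (f n) (f (Suc n)))"

lemma D_iie_sub: "D_iie T \<subseteq> T" unfolding D_iie_def by auto

lemma D_iie_tree: "ptree T \<Longrightarrow> ptree (D_iie T)"
  unfolding ptree_def D_iie_def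
  apply clarify
  apply (rule conjI, blast)
  apply (rule_tac x=E in exI)
  using prefix_order.trans by blast

lemma cl_tr_tree: "ptree (cl_tr S)"
  unfolding ptree_def cl_tr_def
  using prefix_order.trans by blast

lemma cl_tr_id: "ptree S \<Longrightarrow> cl_tr S = S"
  unfolding ptree_def cl_tr_def by blast

lemma nochain_mono: "T \<subseteq> S \<Longrightarrow> nochain S \<Longrightarrow> nochain T"
  unfolding nochain_def by blast

lemma D_iie_lengths:
  assumes "u \<in> D_iie T" "ptree T"
  shows "\<exists>v\<in>T. prefix u v \<and> length v = length u + n"
proof -
  obtain E where E0: "E \<subseteq> T" "infinite E" "\<forall>e\<in>E. prefix u e"
    "\<forall>x\<in>E. \<forall>y\<in>E. x \<noteq> y \<longrightarrow> \<not> prefix x y \<and> \<not> prefix y x \<and> length x \<noteq> length y"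
    using assms(1) unfolding D_iie_def by (auto simp del: prefix_def)
  have E: "E \<subseteq> T" "infinite E" "\<forall>e\<in>E. prefix u e"
    "\<forall>x\<in>E. \<forall>y\<in>E. x \<noteq> y \<longrightarrow> length x \<noteq> length y" using E0 by auto
  have inj: "inj_on length E" using E(4) unfolding inj_on_def by blast
  have "infinite (length ` E)"
  proof
    assume "finite (length ` E)"
    then have "finite E" using finite_imageD[OF _ inj] by simp
    with E(2) show False by simp
  qed
  then obtain e where e: "e \<in> E" "length e \<ge> length u + n"
  proof -
    obtain k where "k \<ge> length u + n" "k \<in> length ` E" using \<open>infinite (length ` E)\<close>
      unfolding infinite_nat_iff_unbounded_le by blast
    then show ?thesis using that by blast
  qed
  let ?v = "take (length u + n) e"
  have "e \<in> T" using E(1) e(1) by blast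
  then have "?v \<in> T" using assms(2) take_is_prefix unfolding ptree_def by blast
  moreover have "prefix u ?v"
  proof -
    obtain z where "e = u @ z" using E(3) e(1) unfolding prefix_def by blast
    then show ?thesis by simp
  qed
  moreover have "length ?v = length u + n" using e by simp
  ultimately show ?thesis by blast
qed




lemma prefix_snoc_nth: "prefix (w @ [a]) y \<Longrightarrow> y ! length w = a"
  by (auto simp: prefix_def nth_append)

lemma konig:
  assumes tr: "ptree D" and nc: "nochain D" and uD: "u \<in> D"
    and lens: "\<forall>n. \<exists>v\<in>D. prefix u v \<and> length v = length u + n"
  shows "u \<in> D_iie D"
proof -
  define unb where "unb w \<longleftrightarrow> (\<forall>n. \<exists>v\<in>D. prefix w v \<and> n \<le> length v)" for w
  have unbD: "unb w \<Longrightarrow> w \<in> D" for w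
    using tr unfolding unb_def ptree_def by blast
  have "unb u" unfolding unb_def
  proof
    fix n
    obtain v where "v \<in> D" "prefix u v" "length v = length u + n" using lens by blast
    then show "\<exists>v\<in>D. prefix u v \<and> n \<le> length v" by auto
  qed
  have "\<exists>w. prefix u w \<and> unb w \<and> (\<forall>a. \<not> unb (w @ [a]))"
  proof (rule ccontr)
    assume H: "\<not> ?thesis"
    define U where "U = {w. prefix u w \<and> unb w}"
    have step: "\<exists>c. c \<in> U \<and> (\<exists>a. c = w @ [a])" if wU: "w \<in> U" for w
    proof -
      obtain a where "unb (w @ [a])" using H wU unfolding U_def by blast
      moreover have "prefix u (w @ [a])" using wU unfolding U_def
        by (metis CollectD prefix_order.trans prefix_append)
      ultimately show ?thesis unfolding U_def by blast
    qed
    define f where "f = rec_nat u (\<lambda>_ w. SOME c. c \<in> U \<and> (\<exists>a. c = w @ [a]))"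
    have f0: "f 0 = u" and fS: "f (Suc n) = (SOME c. c \<in> U \<and> (\<exists>a. c = f n @ [a]))" for n
      unfolding f_def by simp_all
    have fU: "f n \<in> U" for n
    proof (induction n)
      case 0 then show ?case using \<open>unb u\<close> unfolding U_def f0 by simp
    next
      case (Suc n) then show ?case unfolding fS using someI_ex[OF step[OF Suc]] by blast
    qed
    have fstep: "\<exists>a. f (Suc n) = f n @ [a]" for n
      unfolding fS using someI_ex[OF step[OF fU[of n]]] by blast
    have "\<forall>n. f n \<in> D \<and> strict_prefix (f n) (f (Suc n))"
    proof
      fix n
      have "f n \<in> D" using fU unbD unfolding U_def by blast
      moreover obtain a where "f (Suc n) = f n @ [a]" using fstep by blast
      ultimately show "f n \<in> D \<and> strict_prefix (f n) (f (Suc n))"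
        using strict_prefixI'[of "f n @ [a]" "f n" a "[]"] by simp
    qed
    then show False using nc unfolding nochain_def by blast
  qed
  then obtain w where w: "prefix u w" "unb w" "\<And>a. \<not> unb (w @ [a])" by blast
  have bnd: "\<exists>B. \<forall>v\<in>D. prefix (w @ [a]) v \<longrightarrow> length v \<le> B" for a
  proof (rule ccontr)
    assume nb: "\<not> ?thesis"
    have "unb (w @ [a])" unfolding unb_def
    proof
      fix n
      from nb obtain v where "v \<in> D" "prefix (w @ [a]) v" "\<not> length v \<le> n" by blast
      then show "\<exists>v\<in>D. prefix (w @ [a]) v \<and> n \<le> length v" by auto
    qed
    with w(3) show False by blast
  qed
  define A where "A = {a. w @ [a] \<in> D}"
  define Vs where "Vs a = {v \<in> D. prefix (w @ [a]) v}" for a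
  define H where "H a = Max (length ` Vs a)" for a
  have finV: "finite (length ` Vs a)" for a
  proof -
    obtain B where "\<forall>v\<in>D. prefix (w @ [a]) v \<longrightarrow> length v \<le> B" using bnd by blast
    then have "length ` Vs a \<subseteq> {..B}" unfolding Vs_def by auto
    then show ?thesis using finite_subset by blast
  qed
  have Hle: "length v \<le> H a" if "v \<in> D" "prefix (w @ [a]) v" for v a
    unfolding H_def using finV that by (auto simp: Vs_def)
  have Hin: "\<exists>v\<in>D. prefix (w @ [a]) v \<and> length v = H a" if "a \<in> A" for a
  proof -
    have "w @ [a] \<in> Vs a" using that unfolding A_def Vs_def by simp
    then have "H a \<in> length ` Vs a" unfolding H_def using finV by (intro Max_in) auto
    then show ?thesis unfolding Vs_def by auto
  qed
  define Hs where "Hs = H ` A"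
  have infH: "infinite Hs"
  proof
    assume fin: "finite Hs"
    define M where "M = Max (insert (length w) Hs)"
    have "length v \<le> M" if vD: "v \<in> D" and pw: "prefix w v" for v
    proof (cases "v = w")
      case True then show ?thesis unfolding M_def using fin by simp
    next
      case False
      then obtain a z where vz: "v = w @ a # z" using pw unfolding prefix_def
        by (metis append.right_neutral neq_Nil_conv)
      then have pv: "prefix (w @ [a]) v" by simp
      then have "w @ [a] \<in> D" using tr vD unfolding ptree_def by blast
      then have "a \<in> A" unfolding A_def by simp
      then have "H a \<in> Hs" unfolding Hs_def by simp
      then have "H a \<le> M" unfolding M_def using fin by simp
      moreover have "length v \<le> H a" using Hle vD pv by blast
      ultimately show ?thesis by simp
    qed
    moreover obtain v where "v \<in> D" "prefix w v" "Suc M \<le> length v" using w(2) unfolding unb_def by blast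
    ultimately show False by fastforce
  qed
  have ch: "\<exists>a v. a \<in> A \<and> H a = h \<and> v \<in> D \<and> prefix (w @ [a]) v \<and> length v = h" if "h \<in> Hs" for h
    using that Hin unfolding Hs_def by fastforce
  define ah where "ah h = (SOME a. \<exists>v. a \<in> A \<and> H a = h \<and> v \<in> D \<and> prefix (w @ [a]) v \<and> length v = h)" for h
  define vh where "vh h = (SOME v. ah h \<in> A \<and> H (ah h) = h \<and> v \<in> D \<and> prefix (w @ [ah h]) v \<and> length v = h)" for h
  have vh: "ah h \<in> A \<and> H (ah h) = h \<and> vh h \<in> D \<and> prefix (w @ [ah h]) (vh h) \<and> length (vh h) = h"
    if "h \<in> Hs" for h
  proof -
    have "\<exists>v. ah h \<in> A \<and> H (ah h) = h \<and> v \<in> D \<and> prefix (w @ [ah h]) v \<and> length v = h"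
      unfolding ah_def using someI_ex[OF ch[OF that]] .
    then show ?thesis unfolding vh_def by (rule someI_ex)
  qed
  define E where "E = vh ` Hs"
  have injv: "inj_on vh Hs" unfolding inj_on_def using vh by metis
  have "E \<subseteq> D" unfolding E_def using vh by blast
  moreover have "infinite E" unfolding E_def using infH finite_imageD[OF _ injv] by blast
  moreover have "\<forall>e\<in>E. prefix u e" unfolding E_def
  proof
    fix e assume "e \<in> vh ` Hs"
    then obtain h where "h \<in> Hs" "e = vh h" by blast
    then have "prefix (w @ [ah h]) e" using vh by blast
    then show "prefix u e" using w(1) by (metis prefix_order.trans prefix_append)
  qed
  moreover have "\<forall>x\<in>E. \<forall>y\<in>E. x \<noteq> y \<longrightarrow> \<not> prefix x y \<and> \<not> prefix y x \<and> length x \<noteq> length y"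
  proof (intro ballI impI)
    fix x y assume "x \<in> E" "y \<in> E" "x \<noteq> y"
    then obtain h h' where hh: "h \<in> Hs" "h' \<in> Hs" "x = vh h" "y = vh h'" unfolding E_def by blast
    with \<open>x \<noteq> y\<close> have "h \<noteq> h'" by blast
    note v1 = vh[OF hh(1)] and v2 = vh[OF hh(2)]
    have ne: "ah h \<noteq> ah h'" using v1 v2 \<open>h \<noteq> h'\<close> by metis
    have lx: "length x = h" "length y = h'" using v1 v2 hh by auto
    have px: "prefix (w @ [ah h]) x" and py: "prefix (w @ [ah h']) y" using v1 v2 hh by auto
    have nx: "x ! length w = ah h" using prefix_snoc_nth[OF px] .
    have ny: "y ! length w = ah h'" using prefix_snoc_nth[OF py] .
    have lwx: "length w < length x" using prefix_length_le[OF px] by simp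
    have lwy: "length w < length y" using prefix_length_le[OF py] by simp
    have "\<not> prefix x y"
    proof
      assume "prefix x y"
      then have "y ! length w = x ! length w" using lwx by (metis nth_append prefix_def)
      with nx ny ne show False by simp
    qed
    moreover have "\<not> prefix y x"
    proof
      assume "prefix y x"
      then have "x ! length w = y ! length w" using lwy by (metis nth_append prefix_def)
      with nx ny ne show False by simp
    qed
    moreover have "length x \<noteq> length y" using lx \<open>h \<noteq> h'\<close> by simp
    ultimately show "\<not> prefix x y \<and> \<not> prefix y x \<and> length x \<noteq> length y" by blast
  qed
  ultimately show ?thesis unfolding D_iie_def using uD by blast
qed




lemma prefix_len_eq: "prefix u v \<Longrightarrow> length v = length u \<Longrightarrow> v = u"
  by (auto simp: prefix_def)

definition adm_from :: "nat list set \<Rightarrow> nat list \<Rightarrow> (nat list \<Rightarrow> nat list) \<Rightarrow> nat list set \<Rightarrow> bool" where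
  "adm_from T u \<phi> S \<longleftrightarrow> (\<forall>s\<in>T. \<forall>t\<in>T. prefix s t \<longrightarrow> prefix (\<phi> s) (\<phi> t)) \<and>
     (\<forall>t\<in>T. length (\<phi> t) = length u + sum_list t \<and> prefix u (\<phi> t) \<and> \<phi> t \<in> S)"

definition cond :: "('o::wellorder \<Rightarrow> nat \<Rightarrow> 'o) \<Rightarrow> 'o \<Rightarrow> bool" where
  "cond \<pi> \<beta> \<longleftrightarrow> (\<forall>\<beta>'. \<beta>' \<le> \<beta> \<longrightarrow> ord_limit \<beta>' \<longrightarrow> bij_betw (\<pi> \<beta>') UNIV {\<gamma>. \<gamma> < \<beta>'})"

lemma cond_le: "cond \<pi> \<beta> \<Longrightarrow> \<gamma> \<le> \<beta> \<Longrightarrow> cond \<pi> \<gamma>"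
  unfolding cond_def by (meson order_trans)

lemma cond_lim: "cond \<pi> \<beta> \<Longrightarrow> ord_limit \<beta> \<Longrightarrow> \<pi> \<beta> n < \<beta>"
  unfolding cond_def using bij_betwE by fastforce

lemma cond_lim_surj: "cond \<pi> \<beta> \<Longrightarrow> ord_limit \<beta> \<Longrightarrow> \<gamma> < \<beta> \<Longrightarrow> \<exists>n. \<pi> \<beta> n = \<gamma>"
  unfolding cond_def bij_betw_def by (metis (no_types, lifting) image_iff mem_Collect_eq order_refl)

lemma T_unf:
  fixes \<beta> :: "'o::wellorder"
  assumes "cond \<pi> \<beta>"
  shows "T_tree \<pi> \<beta> = (if ord_zero \<beta> then {[]}
     else if ord_succ \<beta> then insert [] (\<Union>n. (\<lambda>t. n # t) ` T_tree \<pi> (ord_pred \<beta>))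
     else insert [] (\<Union>n. (\<lambda>t. n # t) ` T_tree \<pi> (\<pi> \<beta> n)))"
  by (rule T_tree_unfold) (use cond_lim[OF assms] in blast)

lemma Nil_T: "cond \<pi> \<beta> \<Longrightarrow> [] \<in> T_tree \<pi> \<beta>"
  by (subst T_unf) auto

lemma D_iter_props:
  fixes \<beta> :: "'o::wellorder"
  shows "ptree (D_iter S \<beta>) \<and> D_iter S \<beta> \<subseteq> cl_tr S"
proof (induction \<beta> rule: less_induct)
  case (less \<beta>)
  show ?case
  proof (cases "ord_zero \<beta>")
    case True then show ?thesis using D_iter_unfold[of S \<beta>] cl_tr_tree by simp
  next
    case nz: False
    show ?thesis
    proof (cases "ord_succ \<beta>")
      case True
      have e: "D_iter S \<beta> = D_iie (D_iter S (ord_pred \<beta>))" using D_iter_unfold[of S \<beta>] nz True by simp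
      have "ptree (D_iter S (ord_pred \<beta>)) \<and> D_iter S (ord_pred \<beta>) \<subseteq> cl_tr S"
        using less ord_pred_props(1)[OF True] by blast
      then show ?thesis unfolding e using D_iie_tree D_iie_sub by blast
    next
      case False
      have e: "D_iter S \<beta> = (\<Inter>\<gamma>\<in>{\<gamma>. \<gamma> < \<beta>}. D_iter S \<gamma>)" using D_iter_unfold[of S \<beta>] nz False by simp
      obtain \<gamma>0 where g0: "\<gamma>0 < \<beta>" using nz unfolding ord_zero_def by blast
      have IH: "\<And>\<gamma>. \<gamma> < \<beta> \<Longrightarrow> ptree (D_iter S \<gamma>) \<and> D_iter S \<gamma> \<subseteq> cl_tr S" using less by blast
      have "ptree (\<Inter>\<gamma>\<in>{\<gamma>. \<gamma> < \<beta>}. D_iter S \<gamma>)" using IH unfolding ptree_def by blast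
      moreover have "(\<Inter>\<gamma>\<in>{\<gamma>. \<gamma> < \<beta>}. D_iter S \<gamma>) \<subseteq> cl_tr S" using IH g0 by blast
      ultimately show ?thesis unfolding e by blast
    qed
  qed
qed

lemma glue:
  assumes A: "\<And>n. adm_from (Tn n) (V n) (\<Psi> n) S"
    and Vp: "\<And>n. prefix u (V n) \<and> length (V n) = length u + n" and uS: "u \<in> S"
  shows "adm_from (insert [] (\<Union>n. (\<lambda>t. n # t) ` Tn n)) u (\<lambda>t. case t of [] \<Rightarrow> u | n # t' \<Rightarrow> \<Psi> n t') S"
  unfolding adm_from_def
proof (intro conjI ballI impI)
  let ?T = "insert [] (\<Union>n. (\<lambda>t. n # t) ` Tn n)"
  let ?\<phi> = "\<lambda>t. case t of [] \<Rightarrow> u | n # t' \<Rightarrow> \<Psi> n t'"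
  fix t assume t: "t \<in> ?T"
  have "length (?\<phi> t) = length u + sum_list t \<and> prefix u (?\<phi> t) \<and> ?\<phi> t \<in> S"
  proof (cases t)
    case Nil then show ?thesis using uS by simp
  next
    case (Cons n t')
    then have "t' \<in> Tn n" using t by auto
    then have "length (\<Psi> n t') = length (V n) + sum_list t' \<and> prefix (V n) (\<Psi> n t') \<and> \<Psi> n t' \<in> S"
      using A[of n] unfolding adm_from_def by blast
    then show ?thesis using Vp[of n] Cons by (auto intro: prefix_order.trans)
  qed
  then show "length (?\<phi> t) = length u + sum_list t" "prefix u (?\<phi> t)" "?\<phi> t \<in> S" by auto
next
  let ?T = "insert [] (\<Union>n. (\<lambda>t. n # t) ` Tn n)"
  let ?\<phi> = "\<lambda>t. case t of [] \<Rightarrow> u | n # t' \<Rightarrow> \<Psi> n t'"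
  fix s t assume s: "s \<in> ?T" and t: "t \<in> ?T" and st: "prefix s t"
  show "prefix (?\<phi> s) (?\<phi> t)"
  proof (cases s)
    case Nil
    show ?thesis
    proof (cases t)
      case Nil then show ?thesis using \<open>s = []\<close> by simp
    next
      case (Cons n t')
      then have "t' \<in> Tn n" using t by auto
      then have "prefix (V n) (\<Psi> n t')" using A[of n] unfolding adm_from_def by blast
      then show ?thesis using Vp[of n] Cons \<open>s = []\<close> by (auto intro: prefix_order.trans)
    qed
  next
    case (Cons n s')
    then obtain t' where t': "t = n # t'" "prefix s' t'" using st by (auto simp: prefix_def)
    have "s' \<in> Tn n" using s Cons by auto
    moreover have "t' \<in> Tn n" using t t' by auto
    ultimately have "prefix (\<Psi> n s') (\<Psi> n t')" using A[of n] t'(2) unfolding adm_from_def by blast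
    then show ?thesis using Cons t' by simp
  qed
qed

lemma split_adm:
  assumes A: "adm_from (insert [] (\<Union>n. (\<lambda>t. n # t) ` Tn n)) u \<phi> S" and N: "[] \<in> Tn n"
  shows "\<phi> [] = u" "adm_from (Tn n) (\<phi> [n]) (\<lambda>t. \<phi> (n # t)) S" "prefix u (\<phi> [n])"
    "length (\<phi> [n]) = length u + n"
proof -
  let ?T = "insert [] (\<Union>n. (\<lambda>t. n # t) ` Tn n)"
  have inT: "n # t \<in> ?T" if "t \<in> Tn n" for t using that by blast
  have mono: "\<And>s t. s \<in> ?T \<Longrightarrow> t \<in> ?T \<Longrightarrow> prefix s t \<Longrightarrow> prefix (\<phi> s) (\<phi> t)"
    and props: "\<And>t. t \<in> ?T \<Longrightarrow> length (\<phi> t) = length u + sum_list t \<and> prefix u (\<phi> t) \<and> \<phi> t \<in> S"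
    using A unfolding adm_from_def by blast+
  show "\<phi> [] = u" using props[of "[]"] prefix_len_eq[of u "\<phi> []"] by simp
  have n1: "[n] \<in> ?T" using inT[OF N] .
  show "prefix u (\<phi> [n])" "length (\<phi> [n]) = length u + n" using props[OF n1] by simp_all
  show "adm_from (Tn n) (\<phi> [n]) (\<lambda>t. \<phi> (n # t)) S" unfolding adm_from_def
  proof (intro conjI ballI impI)
    fix s t assume "s \<in> Tn n" "t \<in> Tn n" "prefix s t"
    then show "prefix (\<phi> (n # s)) (\<phi> (n # t))" using mono inT by simp
  next
    fix t assume t: "t \<in> Tn n"
    have pn: "prefix (\<phi> [n]) (\<phi> (n # t))" using mono[OF n1 inT[OF t]] by simp
    show "prefix (\<phi> [n]) (\<phi> (n # t))" by (rule pn)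
    show "length (\<phi> (n # t)) = length (\<phi> [n]) + sum_list t" using props[OF inT[OF t]] props[OF n1] by simp
    show "\<phi> (n # t) \<in> S" using props[OF inT[OF t]] by simp
  qed
qed




lemma core:
  fixes \<beta> :: "'o::wellorder" and \<pi> :: "'o \<Rightarrow> nat \<Rightarrow> 'o"
  assumes tr: "ptree S" and nc: "nochain S"
  shows "cond \<pi> \<beta> \<Longrightarrow> (\<exists>\<phi>. adm_from (T_tree \<pi> \<beta>) u \<phi> S) \<longleftrightarrow> u \<in> D_iter S \<beta>"
proof (induction \<beta> arbitrary: u rule: less_induct)
  case (less \<beta>)
  have clS: "cl_tr S = S" using cl_tr_id[OF tr] .
  have DS: "\<And>\<gamma>::'o. ptree (D_iter S \<gamma>) \<and> D_iter S \<gamma> \<subseteq> S" using D_iter_props clS by metis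
  show ?case
  proof (cases "ord_zero \<beta>")
    case True
    have eT: "T_tree \<pi> \<beta> = {[]}" using T_unf[OF less.prems] True by simp
    have eD: "D_iter S \<beta> = S" using D_iter_unfold[of S \<beta>] True clS by simp
    show ?thesis unfolding eT eD
    proof
      assume "\<exists>\<phi>. adm_from {[]} u \<phi> S"
      then obtain \<phi> where "adm_from {[]} u \<phi> S" by blast
      then have "length (\<phi> []) = length u" "prefix u (\<phi> [])" "\<phi> [] \<in> S" unfolding adm_from_def by auto
      then show "u \<in> S" using prefix_len_eq[of u "\<phi> []"] by simp
    next
      assume "u \<in> S"
      then have "adm_from {[]} u (\<lambda>_. u) S" unfolding adm_from_def by simp
      then show "\<exists>\<phi>. adm_from {[]} u \<phi> S" by blast
    qed
  next
    case nz: False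
    show ?thesis
    proof (cases "ord_succ \<beta>")
      case sc: True
      define \<gamma> where "\<gamma> = ord_pred \<beta>"
      have gl: "\<gamma> < \<beta>" unfolding \<gamma>_def using ord_pred_props(1)[OF sc] .
      have cg: "cond \<pi> \<gamma>" using cond_le[OF less.prems] gl by simp
      have IH: "\<And>v. (\<exists>\<phi>. adm_from (T_tree \<pi> \<gamma>) v \<phi> S) \<longleftrightarrow> v \<in> D_iter S \<gamma>" using less.IH[OF gl cg] .
      have eT: "T_tree \<pi> \<beta> = insert [] (\<Union>n. (\<lambda>t. n # t) ` T_tree \<pi> \<gamma>)"
        using T_unf[OF less.prems] nz sc unfolding \<gamma>_def by simp
      have eD: "D_iter S \<beta> = D_iie (D_iter S \<gamma>)" using D_iter_unfold[of S \<beta>] nz sc unfolding \<gamma>_def by simp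
      have N: "[] \<in> T_tree \<pi> \<gamma>" using Nil_T[OF cg] .
      show ?thesis unfolding eT eD
      proof
        assume "\<exists>\<phi>. adm_from (insert [] (\<Union>n. (#) n ` T_tree \<pi> \<gamma>)) u \<phi> S"
        then obtain \<phi> where \<phi>: "adm_from (insert [] (\<Union>n. (#) n ` T_tree \<pi> \<gamma>)) u \<phi> S" by blast
        note sp = split_adm[OF \<phi> N]
        have inD: "\<phi> [n] \<in> D_iter S \<gamma>" for n using IH sp(2)[of n] by blast
        have "u \<in> D_iter S \<gamma>" using inD[of 0] sp(3)[of 0] sp(4)[of 0] prefix_len_eq[of u "\<phi> [0]"] by simp
        moreover have "\<forall>n. \<exists>v\<in>D_iter S \<gamma>. prefix u v \<and> length v = length u + n"
          using inD sp(3,4) by blast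
        ultimately show "u \<in> D_iie (D_iter S \<gamma>)"
          using konig[of "D_iter S \<gamma>" u] DS nochain_mono[OF _ nc] by blast
      next
        assume uD: "u \<in> D_iie (D_iter S \<gamma>)"
        have "\<forall>n. \<exists>v \<psi>. prefix u v \<and> length v = length u + n \<and> adm_from (T_tree \<pi> \<gamma>) v \<psi> S"
        proof
          fix n
          obtain v where "v \<in> D_iter S \<gamma>" "prefix u v" "length v = length u + n"
            using D_iie_lengths[OF uD] DS by blast
          then show "\<exists>v \<psi>. prefix u v \<and> length v = length u + n \<and> adm_from (T_tree \<pi> \<gamma>) v \<psi> S"
            using IH by blast
        qed
        then obtain V \<Psi> where VP: "\<And>n. prefix u (V n) \<and> length (V n) = length u + n \<and> adm_from (T_tree \<pi> \<gamma>) (V n) (\<Psi> n) S"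
          by metis
        have uS: "u \<in> S" using uD D_iie_sub DS by blast
        show "\<exists>\<phi>. adm_from (insert [] (\<Union>n. (#) n ` T_tree \<pi> \<gamma>)) u \<phi> S"
          using glue[of "\<lambda>_. T_tree \<pi> \<gamma>" V \<Psi> S u] VP uS by blast
      qed
    next
      case ns: False
      have lim: "ord_limit \<beta>" unfolding ord_limit_def using nz ns by simp
      have lt: "\<pi> \<beta> n < \<beta>" for n using cond_lim[OF less.prems lim] .
      have cg: "cond \<pi> (\<pi> \<beta> n)" for n using cond_le[OF less.prems] lt[of n] by simp
      have IH: "\<And>n v. (\<exists>\<phi>. adm_from (T_tree \<pi> (\<pi> \<beta> n)) v \<phi> S) \<longleftrightarrow> v \<in> D_iter S (\<pi> \<beta> n)"
        using less.IH[OF lt cg] .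
      have eT: "T_tree \<pi> \<beta> = insert [] (\<Union>n. (\<lambda>t. n # t) ` T_tree \<pi> (\<pi> \<beta> n))"
        using T_unf[OF less.prems] nz ns by simp
      have eD: "D_iter S \<beta> = (\<Inter>\<gamma>\<in>{\<gamma>. \<gamma> < \<beta>}. D_iter S \<gamma>)" using D_iter_unfold[of S \<beta>] nz ns by simp
      have N: "[] \<in> T_tree \<pi> (\<pi> \<beta> n)" for n using Nil_T[OF cg] .
      show ?thesis unfolding eT eD
      proof
        assume "\<exists>\<phi>. adm_from (insert [] (\<Union>n. (#) n ` T_tree \<pi> (\<pi> \<beta> n))) u \<phi> S"
        then obtain \<phi> where \<phi>: "adm_from (insert [] (\<Union>n. (#) n ` T_tree \<pi> (\<pi> \<beta> n))) u \<phi> S" by blast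
        show "u \<in> (\<Inter>\<gamma>\<in>{\<gamma>. \<gamma> < \<beta>}. D_iter S \<gamma>)"
        proof
          fix \<gamma> assume "\<gamma> \<in> {\<gamma>. \<gamma> < \<beta>}"
          then obtain n where n: "\<pi> \<beta> n = \<gamma>" using cond_lim_surj[OF less.prems lim] by blast
          note sp = split_adm[OF \<phi> N[of n]]
          have "\<phi> [n] \<in> D_iter S \<gamma>" using IH sp(2) n by blast
          then show "u \<in> D_iter S \<gamma>" using DS sp(3) unfolding ptree_def by blast
        qed
      next
        assume uD: "u \<in> (\<Inter>\<gamma>\<in>{\<gamma>. \<gamma> < \<beta>}. D_iter S \<gamma>)"
        have "\<forall>n. \<exists>v \<psi>. prefix u v \<and> length v = length u + n \<and> adm_from (T_tree \<pi> (\<pi> \<beta> n)) v \<psi> S"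
        proof
          fix n
          let ?g = "\<pi> \<beta> n"
          note nx = limit_next_below[OF lim lt[of n]]
          have "ord_next ?g \<noteq> ?g" using nx(2) by simp
          have nz2: "\<not> ord_zero (ord_next ?g)" using nx(2) unfolding ord_zero_def by blast
          have "u \<in> D_iter S (ord_next ?g)" using uD nx(1) by blast
          then have u2: "u \<in> D_iie (D_iter S ?g)" using D_iter_unfold[of S "ord_next ?g"] nz2 nx(3,4) by simp
          obtain v where "v \<in> D_iter S ?g" "prefix u v" "length v = length u + n"
            using D_iie_lengths[OF u2] DS by blast
          then show "\<exists>v \<psi>. prefix u v \<and> length v = length u + n \<and> adm_from (T_tree \<pi> ?g) v \<psi> S"
            using IH by blast
        qed
        then obtain V \<Psi> where VP: "\<And>n. prefix u (V n) \<and> length (V n) = length u + n \<and> adm_from (T_tree \<pi> (\<pi> \<beta> n)) (V n) (\<Psi> n) S"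
          by metis
        have uS: "u \<in> S" using uD lt[of 0] DS by blast
        show "\<exists>\<phi>. adm_from (insert [] (\<Union>n. (#) n ` T_tree \<pi> (\<pi> \<beta> n))) u \<phi> S"
          using glue[of "\<lambda>n. T_tree \<pi> (\<pi> \<beta> n)" V \<Psi> S u] VP uS by blast
      qed
    qed
  qed
qed




lemma S_tree:
  assumes "suslin_scheme C"
  shows "ptree (S_C C y)"
  unfolding ptree_def S_C_def
proof (intro ballI allI impI)
  fix t s assume "t \<in> {s. y \<in> closure (C s)}" "prefix s t"
  then show "s \<in> {s. y \<in> closure (C s)}" using assms closure_mono unfolding suslin_scheme_def by blast
qed

lemma S_nochain:
  assumes sc: "suslin_scheme C" and eq: "suslin_op (closure_scheme C) = X" and y: "y \<notin> X"
  shows "nochain (S_C C y)"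
  unfolding nochain_def
proof
  assume "\<exists>f. \<forall>n. f n \<in> S_C C y \<and> strict_prefix (f n) (f (Suc n))"
  then obtain f where f: "\<And>n. f n \<in> S_C C y" "\<And>n. strict_prefix (f n) (f (Suc n))" by blast
  have len: "n \<le> length (f n)" for n
  proof (induction n)
    case (Suc n) then show ?case using prefix_length_less[OF f(2)[of n]] by simp
  qed simp
  have ch: "m \<le> n \<Longrightarrow> prefix (f m) (f n)" for m n
  proof (induction n)
    case 0 then show ?case by simp
  next
    case (Suc n)
    show ?case
    proof (cases "m = Suc n")
      case False
      then have "prefix (f m) (f n)" using Suc by simp
      then show ?thesis using f(2)[of n] by (meson prefix_order.trans strict_prefix_def)
    qed simp
  qed
  define \<sigma> where "\<sigma> k = f (Suc k) ! k" for k
  have mp: "map \<sigma> [0..<n] = take n (f n)" for n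
  proof (rule nth_equalityI)
    show "length (map \<sigma> [0..<n]) = length (take n (f n))" using len[of n] by simp
    fix k assume "k < length (map \<sigma> [0..<n])"
    then have k: "k < n" by simp
    have "prefix (f (Suc k)) (f n)" using ch k by simp
    moreover have "k < length (f (Suc k))" using len[of "Suc k"] by simp
    ultimately have "f (Suc k) ! k = f n ! k" by (metis nth_append prefix_def)
    then show "map \<sigma> [0..<n] ! k = take n (f n) ! k" using k unfolding \<sigma>_def by simp
  qed
  have "map \<sigma> [0..<n] \<in> S_C C y" for n
    using S_tree[OF sc] f(1)[of n] take_is_prefix[of n "f n"] unfolding mp ptree_def by blast
  then have "y \<in> suslin_op (closure_scheme C)" unfolding suslin_op_def closure_scheme_def S_C_def by blast
  with eq y show False by simp
qed




lemma R_char: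
  assumes N: "[] \<in> T"
  shows "y \<in> R_tree_sp T C \<longleftrightarrow> (\<exists>\<phi>. adm_from T [] \<phi> (S_C C y))"
proof
  assume "y \<in> R_tree_sp T C"
  then obtain \<phi> where "admissible T \<phi>" "\<forall>t\<in>T. y \<in> closure (C (\<phi> t))"
    unfolding R_tree_sp_def R_tree_def closure_scheme_def by blast
  then have "adm_from T [] \<phi> (S_C C y)" unfolding adm_from_def admissible_def S_C_def by auto
  then show "\<exists>\<phi>. adm_from T [] \<phi> (S_C C y)" by blast
next
  assume "\<exists>\<phi>. adm_from T [] \<phi> (S_C C y)"
  then obtain \<phi> where \<phi>: "adm_from T [] \<phi> (S_C C y)" by blast
  then have "admissible T \<phi>" "\<forall>t\<in>T. y \<in> closure (C (\<phi> t))" unfolding adm_from_def admissible_def S_C_def by auto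
  moreover have "\<phi> [] = []" using \<phi> N unfolding adm_from_def by auto
  ultimately show "y \<in> R_tree_sp T C" using N unfolding R_tree_sp_def R_tree_def closure_scheme_def by force
qed




lemma odd_char:
  fixes \<pi> :: "'o::wellorder \<Rightarrow> nat \<Rightarrow> 'o"
  assumes tr: "ptree S" and nc: "nochain S" and cd: "cond \<pi> \<beta>"
  shows "(\<exists>\<phi>. adm_from (insert [] ((\<lambda>t. i # t) ` T_tree \<pi> \<beta>)) [] \<phi> S) \<longleftrightarrow>
         (\<exists>v\<in>D_iter S \<beta>. length v = i)"
proof -
  define Tn where "Tn n = (if n = i then T_tree \<pi> \<beta> else {})" for n
  have eT: "insert [] ((\<lambda>t. i # t) ` T_tree \<pi> \<beta>) = insert [] (\<Union>n. (\<lambda>t. n # t) ` Tn n)"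
  proof (intro equalityI subsetI)
    fix x assume "x \<in> insert [] ((\<lambda>t. i # t) ` T_tree \<pi> \<beta>)"
    then consider "x = []" | t where "t \<in> T_tree \<pi> \<beta>" "x = i # t" by blast
    then show "x \<in> insert [] (\<Union>n. (\<lambda>t. n # t) ` Tn n)"
    proof cases
      case 2
      then have "x \<in> (\<lambda>t. i # t) ` Tn i" unfolding Tn_def by simp
      then show ?thesis by blast
    qed simp
  next
    fix x assume "x \<in> insert [] (\<Union>n. (\<lambda>t. n # t) ` Tn n)"
    then consider "x = []" | n t where "t \<in> Tn n" "x = n # t" by blast
    then show "x \<in> insert [] ((\<lambda>t. i # t) ` T_tree \<pi> \<beta>)"
    proof cases
      case (2 n t)
      then have "n = i" "t \<in> T_tree \<pi> \<beta>" unfolding Tn_def by (simp_all split: if_splits)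
      then show ?thesis using 2 by simp
    qed simp
  qed
  have N: "[] \<in> Tn i" unfolding Tn_def using Nil_T[OF cd] by simp
  note co = core[OF tr nc cd]
  have DS: "ptree (D_iter S \<beta>) \<and> D_iter S \<beta> \<subseteq> S" using D_iter_props[of S \<beta>] cl_tr_id[OF tr] by simp
  show ?thesis unfolding eT
  proof
    assume "\<exists>\<phi>. adm_from (insert [] (\<Union>n. (#) n ` Tn n)) [] \<phi> S"
    then obtain \<phi> where \<phi>: "adm_from (insert [] (\<Union>n. (#) n ` Tn n)) [] \<phi> S" by blast
    note sp = split_adm[OF \<phi> N]
    have "adm_from (T_tree \<pi> \<beta>) (\<phi> [i]) (\<lambda>t. \<phi> (i # t)) S" using sp(2) unfolding Tn_def by simp
    then have "\<phi> [i] \<in> D_iter S \<beta>" using co by blast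
    then show "\<exists>v\<in>D_iter S \<beta>. length v = i" using sp(4) by auto
  next
    assume "\<exists>v\<in>D_iter S \<beta>. length v = i"
    then obtain v where v: "v \<in> D_iter S \<beta>" "length v = i" by blast
    obtain \<psi> where \<psi>: "adm_from (T_tree \<pi> \<beta>) v \<psi> S" using co v(1) by blast
    define V where "V n = (if n = i then v else replicate n 0)" for n
    have A: "adm_from (Tn n) (V n) (\<psi>) S" for n
      using \<psi> unfolding Tn_def V_def by (cases "n = i") (simp_all add: adm_from_def)
    have Vp: "prefix [] (V n) \<and> length (V n) = length [] + n" for n
      unfolding V_def using v by simp
    have "v \<in> S" using v DS by blast
    then have nS: "[] \<in> S" using tr Nil_prefix[of v] unfolding ptree_def by blast
    have "adm_from (insert [] (\<Union>n. (#) n ` Tn n)) [] (\<lambda>t. case t of [] \<Rightarrow> [] | n # t' \<Rightarrow> \<psi> t') S"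
      by (rule glue[of Tn V "\<lambda>_. \<psi>" S "[]", OF A Vp nS])
    then show "\<exists>\<phi>. adm_from (insert [] (\<Union>n. (#) n ` Tn n)) [] \<phi> S" by blast
  qed
qed




theorem proposition6p9:
  fixes X :: "'a::topological_space set" and C :: "nat list \<Rightarrow> 'a set"
    and \<pi> :: "'o::wellorder \<Rightarrow> nat \<Rightarrow> 'o" and \<alpha> :: 'o
  assumes "countable {\<gamma>. \<gamma> < \<alpha>}"
    and "\<forall>\<beta>. \<beta> \<le> \<alpha> \<longrightarrow> ord_limit \<beta> \<longrightarrow> bij_betw (\<pi> \<beta>) UNIV {\<gamma>. \<gamma> < \<beta>}"
    and "suslin_scheme C" and "X \<subseteq> suslin_op C"
    and "suslin_op (closure_scheme C) = X"
  shows "(ord_even \<alpha> \<longrightarrow>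
            R_alpha \<pi> \<alpha> C - X = {y. y \<notin> X \<and> D_iter (S_C C y) (ord_prime \<alpha>) \<noteq> {}})
       \<and> (\<not> ord_even \<alpha> \<longrightarrow>
            R_alpha \<pi> \<alpha> C - X = {y. y \<notin> X \<and> {[]} \<subset> D_iter (S_C C y) (ord_prime \<alpha>)})
       \<and> (\<not> ord_even \<alpha> \<longrightarrow> (\<forall>i. R_tree_sp (Tc_odd \<pi> \<alpha> i) C - X =
            {y. y \<notin> X \<and> D_iter (S_C C y) (ord_prime \<alpha>) \<inter> {s. length s = i} \<noteq> {}}))"
proof -
  have ca: "cond \<pi> \<alpha>" using assms(2) unfolding cond_def .
  have cp: "cond \<pi> (ord_prime \<alpha>)" using cond_le[OF ca ord_prime_le] .
  let ?D = "\<lambda>y. D_iter (S_C C y) (ord_prime \<alpha>)"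
  have tr: "ptree (S_C C y)" for y using S_tree[OF assms(3)] .
  have nc: "y \<notin> X \<Longrightarrow> nochain (S_C C y)" for y using S_nochain[OF assms(3) assms(5)] .
  have Dtr: "ptree (?D y)" for y using D_iter_props by blast
  have NT: "[] \<in> T_tree \<pi> (ord_prime \<alpha>)" using Nil_T[OF cp] .
  have odd: "R_tree_sp (Tc_odd \<pi> \<alpha> i) C - X =
            {y. y \<notin> X \<and> ?D y \<inter> {s. length s = i} \<noteq> {}}" for i
  proof (rule set_eqI)
    fix y
    show "y \<in> R_tree_sp (Tc_odd \<pi> \<alpha> i) C - X \<longleftrightarrow> y \<in> {y. y \<notin> X \<and> ?D y \<inter> {s. length s = i} \<noteq> {}}"
    proof (cases "y \<in> X")
      case False
      have "y \<in> R_tree_sp (Tc_odd \<pi> \<alpha> i) C \<longleftrightarrow> (\<exists>\<phi>. adm_from (Tc_odd \<pi> \<alpha> i) [] \<phi> (S_C C y))"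
        by (rule R_char) (simp add: Tc_odd_def)
      also have "\<dots> \<longleftrightarrow> (\<exists>v\<in>?D y. length v = i)"
        unfolding Tc_odd_def by (rule odd_char[OF tr nc[OF False] cp])
      also have "\<dots> \<longleftrightarrow> ?D y \<inter> {s. length s = i} \<noteq> {}" by blast
      finally show ?thesis using False by simp
    qed simp
  qed
  have even: "R_tree_sp (T_tree \<pi> (ord_prime \<alpha>)) C - X = {y. y \<notin> X \<and> ?D y \<noteq> {}}"
  proof (rule set_eqI)
    fix y
    show "y \<in> R_tree_sp (T_tree \<pi> (ord_prime \<alpha>)) C - X \<longleftrightarrow> y \<in> {y. y \<notin> X \<and> ?D y \<noteq> {}}"
    proof (cases "y \<in> X")
      case False
      have "y \<in> R_tree_sp (T_tree \<pi> (ord_prime \<alpha>)) C \<longleftrightarrow> (\<exists>\<phi>. adm_from (T_tree \<pi> (ord_prime \<alpha>)) [] \<phi> (S_C C y))"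
        by (rule R_char) (rule NT)
      also have "\<dots> \<longleftrightarrow> [] \<in> ?D y" by (rule core[OF tr nc[OF False] cp])
      also have "\<dots> \<longleftrightarrow> ?D y \<noteq> {}" using Dtr[of y] Nil_prefix unfolding ptree_def by blast
      finally show ?thesis using False by simp
    qed simp
  qed
  have sub: "{[]} \<subset> ?D y \<longleftrightarrow> ?D y \<inter> {s. length s = 1} \<noteq> {}" for y
  proof
    assume "{[]} \<subset> ?D y"
    then obtain w where w: "w \<in> ?D y" "w \<noteq> []" by blast
    then have "take 1 w \<in> ?D y" using Dtr[of y] take_is_prefix unfolding ptree_def by blast
    moreover have "length (take 1 w) = 1" using w(2) by (cases w) auto
    ultimately show "?D y \<inter> {s. length s = 1} \<noteq> {}" by blast
  next
    assume "?D y \<inter> {s. length s = 1} \<noteq> {}"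
    then obtain w where w: "w \<in> ?D y" "length w = 1" by blast
    then have "[] \<in> ?D y" using Dtr[of y] Nil_prefix unfolding ptree_def by blast
    moreover have "w \<noteq> []" using w by auto
    ultimately show "{[]} \<subset> ?D y" using w by blast
  qed
  show ?thesis
  proof (intro conjI impI)
    assume "ord_even \<alpha>"
    then show "R_alpha \<pi> \<alpha> C - X = {y. y \<notin> X \<and> ?D y \<noteq> {}}"
      unfolding R_alpha_def Tc_def using even by simp
  next
    assume ne: "\<not> ord_even \<alpha>"
    have "R_alpha \<pi> \<alpha> C - X = {y. y \<notin> X \<and> ?D y \<inter> {s. length s = 1} \<noteq> {}}"
      unfolding R_alpha_def Tc_def using ne odd[of 1] by simp
    then show "R_alpha \<pi> \<alpha> C - X = {y. y \<notin> X \<and> {[]} \<subset> ?D y}" using sub by simp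
  next
    show "\<forall>i. R_tree_sp (Tc_odd \<pi> \<alpha> i) C - X = {y. y \<notin> X \<and> ?D y \<inter> {s. length s = i} \<noteq> {}}"
      using odd by blast
  qed
qed


end
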